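(* Let $y_t=\theta_t+Z_t$, $t=1,\dots,n$, where $Z_t$ are independent zero-mean $\sigma$-subgaussian random variables, and let $\beta>0$. For any interval $[t_h,t_l]\subseteq[1,n]$, let $Y=pad_0(y_{t_h},\dots,y_{t_l})$ and $\Theta=pad_0(\theta_{t_h},\dots,\theta_{t_l})$. Then for each coordinate $i$, $|(T(HY))_i|\le|(H\Theta)_i|$ with probability at least $1-2n^{3-\beta/8}$.
   Context: $pad_0(v_a,\dots,v_b)$ is the vector $(v_a-\bar v,\dots,v_b-\bar v)$ with $\bar v$ the average of $v_a,\dots,v_b$, followed by zeros up to length $k$, the smallest power of $2$ that is $\ge b-a+1$. $H\in\mathbb{R}^{k\times k}$ is the orthonormal discrete Haar wavelet transform matrix. $T$ is coordinatewise soft thresholding at level $\lambda=\sigma\sqrt{\beta\log n}$: $T(u)_i=\mathrm{sign}(u_i)\max(|u_i|-\lambda,0)$. *)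

theory Defs
  imports "HOL-Probability.Probability"
begin

text \<open>Vectors are functions nat => real, indexed 0..k-1. Time indices t are 1-based.\<close>

definition pow2ceil :: "nat \<Rightarrow> nat" where
  "pow2ceil m = (LEAST k. (\<exists>j. k = 2 ^ j) \<and> m \<le> k)"

definition pad0 :: "(nat \<Rightarrow> real) \<Rightarrow> nat \<Rightarrow> nat \<Rightarrow> nat \<Rightarrow> real" where
  "pad0 v a b i =
     (let len = b + 1 - a;
          avg = (\<Sum>t=a..b. v t) / real len
      in if i < len then v (a + i) - avg else 0)"

text \<open>Orthonormal discrete Haar matrix of size k = 2^m: row 0 is constant 1/sqrt k; row
  r = 2^j + s (0 <= s < 2^j) is the Haar wavelet at level j and shift s, supported on a block
  of length L = k div 2^j starting at s*L, equal to 1/sqrt L on its first half and -1/sqrt L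
  on its second half.\<close>
definition haar :: "nat \<Rightarrow> nat \<Rightarrow> nat \<Rightarrow> real" where
  "haar k r t =
     (if r = 0 then 1 / sqrt (real k)
      else (let j = (GREATEST j. 2 ^ j \<le> r);
                s = r - 2 ^ j;
                L = k div 2 ^ j
            in if s * L \<le> t \<and> t < s * L + L div 2 then 1 / sqrt (real L)
               else if s * L + L div 2 \<le> t \<and> t < s * L + L then - 1 / sqrt (real L)
               else 0))"

definition haar_pad :: "(nat \<Rightarrow> real) \<Rightarrow> nat \<Rightarrow> nat \<Rightarrow> nat \<Rightarrow> real" where
  "haar_pad v a b i = (let k = pow2ceil (b + 1 - a) in \<Sum>t<k. haar k i t * pad0 v a b t)"

definition soft_thr :: "real \<Rightarrow> real \<Rightarrow> real" where
  "soft_thr lam u = sgn u * max (\<bar>u\<bar> - lam) 0"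

definition subgaussian :: "'a measure \<Rightarrow> ('a \<Rightarrow> real) \<Rightarrow> real \<Rightarrow> bool" where
  "subgaussian M X \<sigma> \<longleftrightarrow>
     (\<forall>l::real. integrable M (\<lambda>\<omega>. exp (l * X \<omega>)) \<and>
        (\<integral>\<omega>. exp (l * X \<omega>) \<partial>M) \<le> exp (l\<^sup>2 * \<sigma>\<^sup>2 / 2))"

end

theory Submission
  imports Defs
begin

lemma pow2ceil_ge: "m \<le> pow2ceil m"
proof -
  have "\<exists>k. (\<exists>j. k = (2::nat) ^ j) \<and> m \<le> k"
    by (rule exI[of _ "2^m"]) (auto intro: less_imp_le[OF less_exp])
  then show ?thesis unfolding pow2ceil_def
    by (rule LeastI2_ex) auto
qed

lemma haar_sq_le: "(haar k r t)\<^sup>2 \<le> (if r = 0 then 1 / real k else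
   (let j = (GREATEST j. 2 ^ j \<le> r); s = r - 2 ^ j; L = k div 2 ^ j
    in if s * L \<le> t \<and> t < s * L + L then 1 / real L else 0))"
  unfolding haar_def Let_def
  by (auto simp: power_divide)

lemma haar_row: "(\<Sum>t<k. (haar k r t)\<^sup>2) \<le> 1"
proof (cases "r = 0")
  case True
  have "(\<Sum>t<k. (haar k r t)\<^sup>2) = (\<Sum>t<k. 1 / real k)"
    using True by (auto simp: haar_def power_divide)
  also have "\<dots> \<le> 1" by simp
  finally show ?thesis .
next
  case False
  define j where "j = (GREATEST j. 2 ^ j \<le> r)"
  define s where "s = r - 2 ^ j"
  define L where "L = k div 2 ^ j"
  define B where "B = {s * L..<s * L + L}"
  have "(\<Sum>t<k. (haar k r t)\<^sup>2) \<le> (\<Sum>t<k. if t \<in> B then 1 / real L else 0)"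
    apply (rule sum_mono)
    using haar_sq_le[of k r] False unfolding B_def L_def s_def j_def Let_def by auto
  also have "\<dots> = (\<Sum>t\<in>{..<k} \<inter> B. 1 / real L)"
    by (rule sum.inter_restrict[symmetric]) simp
  also have "\<dots> \<le> (\<Sum>t\<in>B. 1 / real L)"
    by (rule sum_mono2) (auto simp: B_def)
  also have "\<dots> \<le> 1" by (simp add: B_def)
  finally show ?thesis .
qed

lemma pad0_add: "pad0 (\<lambda>t. u t + w t) a b j = pad0 u a b j + pad0 w a b j"
  unfolding pad0_def Let_def sum.distrib add_divide_distrib by simp

lemma haar_pad_add: "haar_pad (\<lambda>t. u t + w t) a b i = haar_pad u a b i + haar_pad w a b i"
  unfolding haar_pad_def Let_def pad0_add distrib_left sum.distrib ..

lemma sum_shift_ivl: fixes a b :: nat shows "a \<le> b \<Longrightarrow> (\<Sum>s=a..b. g s) = (\<Sum>t<b+1-a. g (a+t))"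
proof -
  assume "a \<le> b"
  have "(\<Sum>s=a..b. g s) = (\<Sum>s=0+a..(b-a)+a. g s)" using \<open>a \<le> b\<close> by simp
  also have "\<dots> = (\<Sum>t=0..b-a. g (t+a))" by (rule sum.shift_bounds_cl_nat_ivl)
  also have "{0..b-a} = {..<b+1-a}" using \<open>a \<le> b\<close> by auto
  finally show ?thesis by (simp add: add.commute)
qed

definition cf :: "nat \<Rightarrow> nat \<Rightarrow> nat \<Rightarrow> nat \<Rightarrow> real" where
  "cf a b i s = (let len = b + 1 - a; k = pow2ceil len in
     haar k i (s - a) - (\<Sum>t<len. haar k i t) / real len)"

lemma haar_pad_lin:
  assumes "a \<le> b"
  shows "haar_pad w a b i = (\<Sum>s=a..b. cf a b i s * w s)"
proof -
  define len where "len = b + 1 - a"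
  define k where "k = pow2ceil len"
  define h where "h t = haar k i t" for t
  define Hs where "Hs = (\<Sum>t<len. h t)"
  define W where "W = (\<Sum>t<len. w (a + t))"
  have lenpos: "len > 0" using assms by (simp add: len_def)
  have kl: "len \<le> k" unfolding k_def by (rule pow2ceil_ge)
  have avg: "(\<Sum>t=a..b. w t) = W" unfolding W_def len_def by (rule sum_shift_ivl[OF assms])
  have "haar_pad w a b i = (\<Sum>t<k. h t * (if t < len then w (a + t) - W / real len else 0))"
    unfolding haar_pad_def pad0_def Let_def h_def k_def len_def[symmetric] avg ..
  also have "\<dots> = (\<Sum>t<len. h t * (if t < len then w (a + t) - W / real len else 0))"
    by (rule sum.mono_neutral_right) (use kl in auto)
  also have "\<dots> = (\<Sum>t<len. h t * (w (a + t) - W / real len))"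
    by (rule sum.cong) auto
  also have "\<dots> = (\<Sum>t<len. h t * w (a + t)) - Hs * W / real len"
  proof -
    have "(\<Sum>t<len. h t * (w (a + t) - W / real len)) = (\<Sum>t<len. h t * w (a + t) - h t * (W / real len))"
      by (rule sum.cong) (auto simp: algebra_simps)
    also have "\<dots> = (\<Sum>t<len. h t * w (a + t)) - Hs * (W / real len)"
      unfolding sum_subtractf Hs_def sum_distrib_right ..
    finally show ?thesis by (simp only: times_divide_eq_right)
  qed
  finally have L: "haar_pad w a b i = (\<Sum>t<len. h t * w (a + t)) - Hs * W / real len" .
  have "(\<Sum>s=a..b. cf a b i s * w s) = (\<Sum>t<len. cf a b i (a+t) * w (a+t))"
    unfolding len_def by (rule sum_shift_ivl[OF assms])
  also have "\<dots> = (\<Sum>t<len. (h t - Hs / real len) * w (a+t))"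
    unfolding cf_def Let_def len_def[symmetric] k_def[symmetric] h_def Hs_def by simp
  also have "\<dots> = (\<Sum>t<len. h t * w (a + t)) - Hs * W / real len"
  proof -
    have "(\<Sum>t<len. (h t - Hs / real len) * w (a+t)) = (\<Sum>t<len. h t * w (a+t) - Hs / real len * w (a+t))"
      by (rule sum.cong) (auto simp: algebra_simps)
    also have "\<dots> = (\<Sum>t<len. h t * w (a+t)) - Hs / real len * W"
      unfolding sum_subtractf W_def sum_distrib_left ..
    finally show ?thesis by (simp only: times_divide_eq_left)
  qed
  finally show ?thesis by (simp only: L)
qed

lemma aux_ineq: "(x::real) = A - 2 * c * h + v \<Longrightarrow> v = c * h \<Longrightarrow> c * h \<ge> 0 \<Longrightarrow> A \<le> B \<Longrightarrow> B \<le> 1 \<Longrightarrow> x \<le> 1"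
  by (simp add: algebra_simps)

lemma cf_sq:
  assumes "a \<le> b"
  shows "(\<Sum>s=a..b. (cf a b i s)\<^sup>2) \<le> 1"
proof -
  define len where "len = b + 1 - a"
  define k where "k = pow2ceil len"
  define h where "h t = haar k i t" for t
  define Hs where "Hs = (\<Sum>t<len. h t)"
  define c where "c = Hs / real len"
  have lenpos: "len > 0" using assms by (simp add: len_def)
  have kl: "len \<le> k" unfolding k_def by (rule pow2ceil_ge)
  have "(\<Sum>s=a..b. (cf a b i s)\<^sup>2) = (\<Sum>t<len. (cf a b i (a+t))\<^sup>2)"
    unfolding len_def by (rule sum_shift_ivl[OF assms])
  also have "\<dots> = (\<Sum>t<len. (h t - c)\<^sup>2)"
    unfolding cf_def Let_def len_def[symmetric] k_def[symmetric] h_def Hs_def c_def by simp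
  also have "\<dots> = (\<Sum>t<len. (h t)\<^sup>2 - 2 * c * h t + c\<^sup>2)"
    by (rule sum.cong) (auto simp: power2_diff algebra_simps)
  also have "\<dots> = (\<Sum>t<len. (h t)\<^sup>2) - 2 * c * Hs + real len * c\<^sup>2"
    by (simp add: sum.distrib sum_subtractf sum_distrib_left[symmetric] Hs_def)
  finally have eq: "(\<Sum>s=a..b. (cf a b i s)\<^sup>2) = (\<Sum>t<len. (h t)\<^sup>2) - 2 * c * Hs + real len * c\<^sup>2" .
  have e2: "real len * c\<^sup>2 = c * Hs"
    using lenpos by (simp add: c_def power2_eq_square)
  have e3: "c * Hs \<ge> 0"
    unfolding c_def times_divide_eq_left by (simp add: divide_nonneg_nonneg)
  have e4: "(\<Sum>t<len. (h t)\<^sup>2) \<le> (\<Sum>t<k. (h t)\<^sup>2)"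
    by (rule sum_mono2) (use kl in auto)
  have e5: "(\<Sum>t<k. (h t)\<^sup>2) \<le> 1" unfolding h_def by (rule haar_row)
  show ?thesis by (rule aux_ineq[OF eq e2 e3 e4 e5])
qed

lemma soft_le: "\<bar>e\<bar> \<le> lam \<Longrightarrow> \<bar>soft_thr lam (x + e)\<bar> \<le> \<bar>x\<bar>"
  unfolding soft_thr_def
  by (auto simp: sgn_if abs_mult)

lemma soft_meas: "(\<lambda>u. soft_thr lam u) \<in> borel_measurable borel"
  unfolding soft_thr_def by measurable


lemma cosh0: "exp x + exp (- x) - 2 = 0 \<Longrightarrow> (x::real) = 0"
proof -
  assume h: "exp x + exp (- x) - 2 = 0"
  have "(exp (x/2) - exp (-x/2))\<^sup>2 = exp (x/2) * exp (x/2) + exp (-x/2) * exp (-x/2) - 2 * (exp (x/2) * exp (-x/2))"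
    by (simp add: power2_eq_square algebra_simps)
  also have "\<dots> = exp x + exp (- x) - 2"
    by (simp add: mult_exp_exp)
  finally have "(exp (x/2) - exp (-x/2))\<^sup>2 = 0" using h by simp
  hence "exp (x/2) = exp (-x/2)" by simp
  hence "x/2 = -x/2" by simp
  thus ?thesis by simp
qed

lemma sg_zero_AE:
  assumes "prob_space M" "subgaussian M X 0"
  shows "AE \<omega> in M. X \<omega> = 0"
proof -
  interpret prob_space M by fact
  have A: "integrable M (\<lambda>\<omega>. exp (1 * X \<omega>)) \<and> (\<integral>\<omega>. exp (1 * X \<omega>) \<partial>M) \<le> exp (1\<^sup>2 * 0\<^sup>2 / 2)"
    using assms(2) unfolding subgaussian_def by blast
  have B: "integrable M (\<lambda>\<omega>. exp ((-1) * X \<omega>)) \<and> (\<integral>\<omega>. exp ((-1) * X \<omega>) \<partial>M) \<le> exp ((-1)\<^sup>2 * 0\<^sup>2 / 2)"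
    using assms(2) unfolding subgaussian_def by blast
  have i1: "integrable M (\<lambda>\<omega>. exp (X \<omega>))" and b1: "(\<integral>\<omega>. exp (X \<omega>) \<partial>M) \<le> 1"
    using A by auto
  have i2: "integrable M (\<lambda>\<omega>. exp (- X \<omega>))" and b2: "(\<integral>\<omega>. exp (- X \<omega>) \<partial>M) \<le> 1"
    using B by auto
  define g where "g \<omega> = exp (X \<omega>) + exp (- X \<omega>) - 2" for \<omega>
  have gi: "integrable M g" unfolding g_def using i1 i2 by auto
  have gnn: "0 \<le> g \<omega>" for \<omega>
  proof -
    have "1 + X \<omega> \<le> exp (X \<omega>)" "1 + (- X \<omega>) \<le> exp (- X \<omega>)" by (rule exp_ge_add_one_self)+
    thus ?thesis unfolding g_def by linarith
  qed
  have "(\<integral>\<omega>. g \<omega> \<partial>M) = (\<integral>\<omega>. exp (X \<omega>) \<partial>M) + (\<integral>\<omega>. exp (- X \<omega>) \<partial>M) - 2"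
    unfolding g_def using i1 i2 by (simp add: prob_space)
  hence "(\<integral>\<omega>. g \<omega> \<partial>M) \<le> 0" using b1 b2 by linarith
  moreover have "(\<integral>\<omega>. g \<omega> \<partial>M) \<ge> 0" by (rule integral_nonneg_AE) (use gnn in auto)
  ultimately have "(\<integral>\<omega>. g \<omega> \<partial>M) = 0" by simp
  hence "AE \<omega> in M. g \<omega> = 0" using integral_nonneg_eq_0_iff_AE[OF gi] gnn by auto
  thus ?thesis by eventually_elim (use cosh0 in \<open>auto simp: g_def\<close>)
qed

lemma sg_sum:
  assumes "prob_space M" "finite I" "prob_space.indep_vars M (\<lambda>_. borel) Z I"
    "\<forall>t\<in>I. subgaussian M (Z t) \<sigma>"
  shows "integrable M (\<lambda>\<omega>. exp (l * (\<Sum>t\<in>I. c t * Z t \<omega>))) \<and>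
    (\<integral>\<omega>. exp (l * (\<Sum>t\<in>I. c t * Z t \<omega>)) \<partial>M) \<le> exp (l\<^sup>2 * (\<sigma>\<^sup>2 * (\<Sum>t\<in>I. (c t)\<^sup>2)) / 2)"
proof -
  interpret prob_space M by fact
  define Y where "Y t \<omega> = exp ((l * c t) * Z t \<omega>)" for t \<omega>
  have eq: "exp (l * (\<Sum>t\<in>I. c t * Z t \<omega>)) = (\<Prod>t\<in>I. Y t \<omega>)" for \<omega>
    unfolding Y_def sum_distrib_left exp_sum[OF assms(2)] by (simp add: mult.assoc)
  have ind: "indep_vars (\<lambda>_. borel) (\<lambda>t \<omega>. (\<lambda>x. exp ((l * c t) * x)) (Z t \<omega>)) I"
    by (rule indep_vars_compose2[OF assms(3)]) simp
  hence ind': "indep_vars (\<lambda>_. borel) Y I" unfolding Y_def by simp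
  have int: "integrable M (Y t)" if "t \<in> I" for t
    using assms(4) that unfolding subgaussian_def Y_def by blast
  have bnd: "(\<integral>\<omega>. Y t \<omega> \<partial>M) \<le> exp ((l * c t)\<^sup>2 * \<sigma>\<^sup>2 / 2)" if "t \<in> I" for t
    using assms(4) that unfolding subgaussian_def Y_def by blast
  have I1: "integrable M (\<lambda>\<omega>. \<Prod>t\<in>I. Y t \<omega>)"
    by (rule indep_vars_integrable[OF assms(2) ind' int])
  have "(\<integral>\<omega>. (\<Prod>t\<in>I. Y t \<omega>) \<partial>M) = (\<Prod>t\<in>I. (\<integral>\<omega>. Y t \<omega> \<partial>M))"
    by (rule indep_vars_lebesgue_integral[OF assms(2) ind' int])
  also have "\<dots> \<le> (\<Prod>t\<in>I. exp ((l * c t)\<^sup>2 * \<sigma>\<^sup>2 / 2))"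
  proof (rule prod_mono, rule conjI)
    fix t assume "t \<in> I"
    show "0 \<le> (\<integral>\<omega>. Y t \<omega> \<partial>M)" by (rule integral_nonneg_AE) (simp add: Y_def)
    show "(\<integral>\<omega>. Y t \<omega> \<partial>M) \<le> exp ((l * c t)\<^sup>2 * \<sigma>\<^sup>2 / 2)" by (rule bnd) fact
  qed
  also have "\<dots> = exp (\<Sum>t\<in>I. (l * c t)\<^sup>2 * \<sigma>\<^sup>2 / 2)"
    by (rule exp_sum[OF assms(2), symmetric])
  also have "(\<Sum>t\<in>I. (l * c t)\<^sup>2 * \<sigma>\<^sup>2 / 2) = (\<Sum>t\<in>I. (l\<^sup>2 * \<sigma>\<^sup>2 / 2) * (c t)\<^sup>2)"
    by (rule sum.cong) (auto simp: power_mult_distrib)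
  also have "\<dots> = l\<^sup>2 * (\<sigma>\<^sup>2 * (\<Sum>t\<in>I. (c t)\<^sup>2)) / 2"
    unfolding sum_distrib_left[symmetric] by simp
  finally show ?thesis using I1 eq by simp
qed

lemma chernoff:
  assumes "prob_space M" "f \<in> borel_measurable M"
    "\<And>l. integrable M (\<lambda>\<omega>. exp (l * f \<omega>)) \<and> (\<integral>\<omega>. exp (l * f \<omega>) \<partial>M) \<le> exp (l\<^sup>2 * v / 2)"
    "v > 0" "lam \<ge> 0"
  shows "measure M {\<omega>\<in>space M. f \<omega> \<ge> lam} \<le> exp (- lam\<^sup>2 / (2 * v))"
proof -
  interpret prob_space M by fact
  have [measurable]: "f \<in> borel_measurable M" by fact
  define l where "l = lam / v"
  have l0: "l \<ge> 0" using assms by (simp add: l_def)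
  have sub: "{\<omega>\<in>space M. f \<omega> \<ge> lam} \<subseteq> {\<omega>\<in>space M. exp (l * f \<omega>) \<ge> exp (l * lam)}"
    using l0 by (auto intro: mult_left_mono)
  have "measure M {\<omega>\<in>space M. f \<omega> \<ge> lam} \<le> measure M {\<omega>\<in>space M. exp (l * f \<omega>) \<ge> exp (l * lam)}"
    by (rule finite_measure_mono[OF sub]) measurable
  also have "\<dots> \<le> (\<integral>\<omega>. exp (l * f \<omega>) \<partial>M) / exp (l * lam)"
    by (rule integral_Markov_inequality_measure[where A="space M"]) (use assms(3) in auto)
  also have "\<dots> \<le> exp (l\<^sup>2 * v / 2) / exp (l * lam)"
    by (rule divide_right_mono) (use assms(3) in auto)
  also have "l\<^sup>2 * v / 2 - l * lam = - lam\<^sup>2 / (2 * v)"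
    unfolding l_def using assms(4) by (simp add: field_simps power2_eq_square)
  hence "exp (l\<^sup>2 * v / 2) / exp (l * lam) = exp (- lam\<^sup>2 / (2 * v))"
    by (simp add: exp_diff[symmetric])
  finally show ?thesis .
qed

theorem lemma3:
  fixes M :: "'a measure" and Z :: "nat \<Rightarrow> 'a \<Rightarrow> real" and \<theta> :: "nat \<Rightarrow> real"
    and n :: nat and \<sigma> \<beta> :: real
  assumes "prob_space M"
    and "n \<ge> 1" and "\<sigma> \<ge> 0" and "\<beta> > 0"
    and "prob_space.indep_vars M (\<lambda>_. borel) Z {1..n}"
    and "\<forall>t\<in>{1..n}. integrable M (Z t) \<and> (\<integral>\<omega>. Z t \<omega> \<partial>M) = 0"
    and "\<forall>t\<in>{1..n}. subgaussian M (Z t) \<sigma>"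
  shows "\<forall>th tl i. 1 \<le> th \<and> th \<le> tl \<and> tl \<le> n \<and> i < pow2ceil (tl + 1 - th) \<longrightarrow>
           measure M {\<omega> \<in> space M.
              \<bar>soft_thr (\<sigma> * sqrt (\<beta> * ln (real n))) (haar_pad (\<lambda>t. \<theta> t + Z t \<omega>) th tl i)\<bar>
                \<le> \<bar>haar_pad \<theta> th tl i\<bar>}
             \<ge> 1 - 2 * real n powr (3 - \<beta> / 8)"
proof (intro allI impI)
  fix th tl i
  assume H: "1 \<le> th \<and> th \<le> tl \<and> tl \<le> n \<and> i < pow2ceil (tl + 1 - th)"
  interpret P: prob_space M by fact
  have sub_I: "{th..tl} \<subseteq> {1..n}" using H by auto
  have Zm: "Z t \<in> borel_measurable M" if "t \<in> {th..tl}" for t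
    using assms(6) sub_I that by (auto intro: borel_measurable_integrable)
  define c where "c s = cf th tl i s" for s
  define S where "S \<omega> = (\<Sum>s\<in>{th..tl}. c s * Z s \<omega>)" for \<omega>
  define lam where "lam = \<sigma> * sqrt (\<beta> * ln (real n))"
  define x where "x = haar_pad \<theta> th tl i"
  have hp: "haar_pad (\<lambda>t. \<theta> t + Z t \<omega>) th tl i = x + S \<omega>" for \<omega>
    using haar_pad_add[of \<theta> "\<lambda>t. Z t \<omega>" th tl i] haar_pad_lin[of th tl "\<lambda>t. Z t \<omega>" i] H
    unfolding S_def c_def x_def by simp
  define T where "T = {\<omega> \<in> space M. \<bar>soft_thr lam (x + S \<omega>)\<bar> \<le> \<bar>x\<bar>}"
  have Teq: "{\<omega> \<in> space M.
              \<bar>soft_thr (\<sigma> * sqrt (\<beta> * ln (real n))) (haar_pad (\<lambda>t. \<theta> t + Z t \<omega>) th tl i)\<bar>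
                \<le> \<bar>haar_pad \<theta> th tl i\<bar>} = T"
    unfolding T_def hp lam_def x_def ..
  have Sm[measurable]: "S \<in> borel_measurable M"
    unfolding S_def by (intro borel_measurable_sum borel_measurable_times borel_measurable_const Zm)
  have sm[measurable]: "soft_thr lam \<in> borel_measurable borel" by (rule soft_meas)
  have Tm: "T \<in> sets M" unfolding T_def by measurable
  have good: "\<omega> \<in> T" if "\<omega> \<in> space M" "\<bar>S \<omega>\<bar> \<le> lam" for \<omega>
    unfolding T_def using that soft_le by blast
  have lnn: "ln (real n) \<ge> 0" using assms(2) by simp
  have pw: "real n powr (3 - \<beta> / 8) \<ge> 0" by simp
  have main: "measure M T \<ge> 1 - 2 * real n powr (3 - \<beta> / 8)"
  proof (cases "\<sigma> = 0")
    case True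
    have "AE \<omega> in M. Z s \<omega> = 0" if "s \<in> {th..tl}" for s
      using sg_zero_AE[OF assms(1), of "Z s"] assms(7) sub_I that True by auto
    hence "AE \<omega> in M. \<forall>s\<in>{th..tl}. Z s \<omega> = 0"
      by (subst AE_ball_countable) auto
    moreover have "AE \<omega> in M. \<omega> \<in> space M" by (rule AE_space)
    ultimately have "AE \<omega> in M. \<omega> \<in> T"
    proof eventually_elim
      case (elim \<omega>)
      thus "\<omega> \<in> T" using good[of \<omega>] True by (simp add: S_def lam_def)
    qed
    hence "measure M T = 1" using P.AE_in_set_eq_1[OF Tm] by simp
    thus ?thesis using pw by simp
  next
    case False
    hence sp: "\<sigma> > 0" using assms(3) by simp
    have cs: "(\<Sum>s\<in>{th..tl}. (c s)\<^sup>2) \<le> 1" unfolding c_def using cf_sq H by blast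
    have sgS: "integrable M (\<lambda>\<omega>. exp (l * S \<omega>)) \<and> (\<integral>\<omega>. exp (l * S \<omega>) \<partial>M) \<le> exp (l\<^sup>2 * \<sigma>\<^sup>2 / 2)" for l
    proof -
      have a: "integrable M (\<lambda>\<omega>. exp (l * S \<omega>)) \<and> (\<integral>\<omega>. exp (l * S \<omega>) \<partial>M) \<le> exp (l\<^sup>2 * (\<sigma>\<^sup>2 * (\<Sum>s\<in>{th..tl}. (c s)\<^sup>2)) / 2)"
        unfolding S_def
        by (rule sg_sum[OF assms(1) _ P.indep_vars_subset[OF assms(5) sub_I]]) (use assms(7) sub_I in auto)
      have "l\<^sup>2 * (\<sigma>\<^sup>2 * (\<Sum>s\<in>{th..tl}. (c s)\<^sup>2)) / 2 \<le> l\<^sup>2 * \<sigma>\<^sup>2 / 2"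
        using cs by (intro divide_right_mono mult_left_mono) (auto intro: mult_left_le)
      thus ?thesis using a by (meson exp_le_cancel_iff order_trans)
    qed
    have sgN: "integrable M (\<lambda>\<omega>. exp (l * (- S \<omega>))) \<and> (\<integral>\<omega>. exp (l * (- S \<omega>)) \<partial>M) \<le> exp (l\<^sup>2 * \<sigma>\<^sup>2 / 2)" for l
      using sgS[of "- l"] by simp
    have lam0: "lam \<ge> 0" unfolding lam_def using assms(3,4) lnn by simp
    have v0: "\<sigma>\<^sup>2 > 0" using sp by simp
    have c1: "measure M {\<omega>\<in>space M. S \<omega> \<ge> lam} \<le> exp (- lam\<^sup>2 / (2 * \<sigma>\<^sup>2))"
      by (rule chernoff[OF assms(1) Sm sgS v0 lam0])
    have c2: "measure M {\<omega>\<in>space M. - S \<omega> \<ge> lam} \<le> exp (- lam\<^sup>2 / (2 * \<sigma>\<^sup>2))"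
      by (rule chernoff[OF assms(1) _ sgN v0 lam0]) simp
    have "lam\<^sup>2 = \<sigma>\<^sup>2 * (\<beta> * ln (real n))"
      unfolding lam_def using assms(4) lnn by (simp add: power_mult_distrib)
    hence "- lam\<^sup>2 / (2 * \<sigma>\<^sup>2) = (- \<beta> / 2) * ln (real n)" using v0 by (simp add: field_simps)
    hence ex: "exp (- lam\<^sup>2 / (2 * \<sigma>\<^sup>2)) = real n powr (- \<beta> / 2)"
      using assms(2) by (simp add: powr_def)
    have pm: "real n powr (- \<beta> / 2) \<le> real n powr (3 - \<beta> / 8)"
      by (rule powr_mono) (use assms(2,4) in auto)
    define A1 where "A1 = {\<omega>\<in>space M. S \<omega> \<ge> lam}"
    define A2 where "A2 = {\<omega>\<in>space M. - S \<omega> \<ge> lam}"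
    have A1m: "A1 \<in> sets M" unfolding A1_def by measurable
    have A2m: "A2 \<in> sets M" unfolding A2_def by measurable
    have "space M - (A1 \<union> A2) \<subseteq> T" using good unfolding A1_def A2_def by force
    hence "measure M (space M - (A1 \<union> A2)) \<le> measure M T"
      by (rule P.finite_measure_mono) (rule Tm)
    moreover have "measure M (space M - (A1 \<union> A2)) = 1 - measure M (A1 \<union> A2)"
      using A1m A2m by (simp add: P.prob_compl)
    moreover have "measure M (A1 \<union> A2) \<le> measure M A1 + measure M A2"
      by (rule measure_Un_le[OF A1m A2m])
    ultimately show ?thesis using c1 c2 ex pm unfolding A1_def A2_def by linarith
  qed
  thus "measure M {\<omega> \<in> space M.
              \<bar>soft_thr (\<sigma> * sqrt (\<beta> * ln (real n))) (haar_pad (\<lambda>t. \<theta> t + Z t \<omega>) th tl i)\<bar>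
                \<le> \<bar>haar_pad \<theta> th tl i\<bar>}
             \<ge> 1 - 2 * real n powr (3 - \<beta> / 8)" unfolding Teq .
qed

end
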